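(* For a $T_0$ space $X$, $X$ is second-countable if and only if its Smyth power space $P_S(X)$ is second-countable.
   Context: The specialization order of $X$ is $x\le y$ iff $x\in\overline{\{y\}}$; saturated sets are upper sets in this order. $\mathsf{K}(X)$ is the set of nonempty compact saturated subsets of $X$. For open $U\subseteq X$, $\Box U=\{K\in\mathsf{K}(X):K\subseteq U\}$; the Smyth power space $P_S(X)$ is $\mathsf{K}(X)$ with the topology having base $\{\Box U: U\text{ open}\}$. *)

theory Defs
  imports "HOL-Analysis.Analysis"
begin

definition spec_le :: "'a topology \<Rightarrow> 'a \<Rightarrow> 'a \<Rightarrow> bool" where
  "spec_le X x y \<longleftrightarrow> x \<in> topspace X \<and> y \<in> topspace X \<and> x \<in> X closure_of {y}"

definition saturatedin :: "'a topology \<Rightarrow> 'a set \<Rightarrow> bool" where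
  "saturatedin X S \<longleftrightarrow> S \<subseteq> topspace X \<and> (\<forall>x y. x \<in> S \<and> spec_le X x y \<longrightarrow> y \<in> S)"

definition smyth_K :: "'a topology \<Rightarrow> 'a set set" where
  "smyth_K X = {K. K \<noteq> {} \<and> compactin X K \<and> saturatedin X K}"

definition smyth_box :: "'a topology \<Rightarrow> 'a set \<Rightarrow> 'a set set" where
  "smyth_box X U = {K \<in> smyth_K X. K \<subseteq> U}"

definition smyth_power :: "'a topology \<Rightarrow> 'a set topology" where
  "smyth_power X = topology_generated_by {smyth_box X U | U. openin X U}"

end

theory Submission
  imports Defs
begin

definition upx :: "'a topology \<Rightarrow> 'a \<Rightarrow> 'a set" where
  "upx X x = {y. spec_le X x y}"

lemma open_upper:
  assumes "openin X U" "x \<in> U" "spec_le X x y" shows "y \<in> U"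
  using assms unfolding spec_le_def in_closure_of by blast

lemma spec_le_trans:
  assumes "spec_le X x y" "spec_le X y z" shows "spec_le X x z"
proof -
  have "X closure_of {y} \<subseteq> X closure_of {z}"
    using assms(2) unfolding spec_le_def
    by (metis closure_of_closure_of closure_of_mono empty_subsetI insert_subset)
  then show ?thesis using assms unfolding spec_le_def by blast
qed

lemma upx_K: assumes "x \<in> topspace X" shows "upx X x \<in> smyth_K X"
proof -
  have self: "x \<in> upx X x" using assms unfolding upx_def spec_le_def
    by (simp add: closure_of_hull hull_inc)
  have sub: "upx X x \<subseteq> topspace X" unfolding upx_def spec_le_def by blast
  have comp: "compactin X (upx X x)"
    unfolding compactin_def
  proof (intro conjI sub allI impI)
    fix \<U> assume h: "(\<forall>U\<in>\<U>. openin X U) \<and> upx X x \<subseteq> \<Union>\<U>"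
    then obtain U where U: "U \<in> \<U>" "x \<in> U" using self by blast
    have oU: "openin X U" using h U(1) by blast
    have "upx X x \<subseteq> U"
    proof
      fix y assume "y \<in> upx X x"
      then have "spec_le X x y" by (simp add: upx_def)
      then show "y \<in> U" by (rule open_upper[OF oU U(2)])
    qed
    then show "\<exists>\<F>. finite \<F> \<and> \<F> \<subseteq> \<U> \<and> upx X x \<subseteq> \<Union>\<F>"
      by (rule_tac x="{U}" in exI) (use U in auto)
  qed
  have sat: "saturatedin X (upx X x)"
    unfolding saturatedin_def
  proof (intro conjI sub allI impI)
    fix a b assume "a \<in> upx X x \<and> spec_le X a b"
    then have "spec_le X x a" "spec_le X a b" by (simp_all add: upx_def)
    then have "spec_le X x b" by (rule spec_le_trans)
    then show "b \<in> upx X x" by (simp add: upx_def)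
  qed
  show ?thesis unfolding smyth_K_def using self comp sat by blast
qed

lemma box_base:
  assumes "generate_topology_on {smyth_box X U | U. openin X U} W" "K \<in> W"
  shows "\<exists>U. openin X U \<and> K \<in> smyth_box X U \<and> smyth_box X U \<subseteq> W"
  using assms
proof (induction arbitrary: K)
  case Empty then show ?case by simp
next
  case (Int a b)
  have Ka: "K \<in> a" and Kb: "K \<in> b" using Int.prems by simp_all
  obtain U1 where "openin X U1" "K \<in> smyth_box X U1" "smyth_box X U1 \<subseteq> a"
    using Int.IH(1)[OF Ka] by blast
  obtain U2 where "openin X U2" "K \<in> smyth_box X U2" "smyth_box X U2 \<subseteq> b"
    using Int.IH(2)[OF Kb] by blast
  have e: "smyth_box X (U1 \<inter> U2) = smyth_box X U1 \<inter> smyth_box X U2"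
    unfolding smyth_box_def by blast
  have "openin X (U1 \<inter> U2)" using \<open>openin X U1\<close> \<open>openin X U2\<close> by (rule openin_Int)
  moreover have "K \<in> smyth_box X (U1 \<inter> U2)" using e \<open>K \<in> smyth_box X U1\<close> \<open>K \<in> smyth_box X U2\<close> by blast
  moreover have "smyth_box X (U1 \<inter> U2) \<subseteq> a \<inter> b" using e \<open>smyth_box X U1 \<subseteq> a\<close> \<open>smyth_box X U2 \<subseteq> b\<close> by blast
  ultimately show ?case by blast
next
  case (UN K' K)
  then obtain k where "k \<in> K'" "K \<in> k" by blast
  then obtain U where "openin X U" "K \<in> smyth_box X U" "smyth_box X U \<subseteq> k"
    using UN.IH[of k K] by blast
  then show ?case using \<open>k \<in> K'\<close> by blast
next
  case (Basis s) then show ?case by blast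
qed

lemma box_open: "openin X U \<Longrightarrow> openin (smyth_power X) (smyth_box X U)"
  unfolding smyth_power_def by (rule topology_generated_by_Basis) blast

theorem mainTheorem5:
  fixes X :: "'a topology"
  assumes "t0_space X"
  shows "second_countable X \<longleftrightarrow> second_countable (smyth_power X)"
proof
  assume "second_countable X"
  then obtain B where B: "countable B" "\<forall>V\<in>B. openin X V"
    "\<forall>U x. openin X U \<and> x \<in> U \<longrightarrow> (\<exists>V\<in>B. x \<in> V \<and> V \<subseteq> U)"
    unfolding second_countable_def by blast
  define C where "C = (\<lambda>F. smyth_box X (\<Union>F)) ` {F. finite F \<and> F \<subseteq> B}"
  have "countable C" unfolding C_def using B(1) countable_Collect_finite_subset by blast
  moreover have "\<forall>V\<in>C. openin (smyth_power X) V"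
    unfolding C_def using B(2) by (auto intro!: box_open)
  moreover have "\<exists>V\<in>C. K \<in> V \<and> V \<subseteq> W" if WK: "openin (smyth_power X) W" "K \<in> W" for W K
  proof -
    have g: "generate_topology_on {smyth_box X U | U. openin X U} W"
      using WK(1) unfolding smyth_power_def by (simp add: openin_topology_generated_by_iff)
    obtain U where U: "openin X U" "K \<in> smyth_box X U" "smyth_box X U \<subseteq> W"
      using box_base[OF g WK(2)] by blast
    have Kc: "compactin X K" "K \<subseteq> U" using U(2) unfolding smyth_box_def smyth_K_def by auto
    let ?U = "{V\<in>B. V \<subseteq> U}"
    have "K \<subseteq> \<Union>?U" using B(3) U(1) Kc(2) by blast
    then obtain F where F: "finite F" "F \<subseteq> ?U" "K \<subseteq> \<Union>F"
    proof -
      have o: "\<forall>V\<in>?U. openin X V" using B(2) by blast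
      have c: "(\<forall>V\<in>?U. openin X V) \<and> K \<subseteq> \<Union>?U \<longrightarrow> (\<exists>F. finite F \<and> F \<subseteq> ?U \<and> K \<subseteq> \<Union>F)"
        using Kc(1) unfolding compactin_def by (elim conjE allE[where x="?U"])
      have "\<exists>F. finite F \<and> F \<subseteq> ?U \<and> K \<subseteq> \<Union>F" using c o \<open>K \<subseteq> \<Union>?U\<close> by blast
      then show ?thesis using that by blast
    qed
    have "K \<in> smyth_box X (\<Union>F)" using U(2) F unfolding smyth_box_def by auto
    moreover have "smyth_box X (\<Union>F) \<subseteq> W"
    proof -
      have "\<Union>F \<subseteq> U" using F(2) by blast
      then have "smyth_box X (\<Union>F) \<subseteq> smyth_box X U" unfolding smyth_box_def by blast
      then show ?thesis using U(3) by blast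
    qed
    moreover have "smyth_box X (\<Union>F) \<in> C" using F unfolding C_def by auto
    ultimately show ?thesis by blast
  qed
  ultimately show "second_countable (smyth_power X)"
    unfolding second_countable_def by (intro exI[of _ C] conjI allI impI) auto
next
  assume "second_countable (smyth_power X)"
  then obtain C where C: "countable C" "\<forall>V\<in>C. openin (smyth_power X) V"
    "\<forall>U x. openin (smyth_power X) U \<and> x \<in> U \<longrightarrow> (\<exists>V\<in>C. x \<in> V \<and> V \<subseteq> U)"
    unfolding second_countable_def by blast
  have cont: "continuous_map X (smyth_power X) (upx X)"
    unfolding smyth_power_def
  proof (rule continuous_on_generated_topo)
    fix S assume "S \<in> {smyth_box X U |U. openin X U}"
    then obtain U where U: "openin X U" "S = smyth_box X U" by blast
    have "upx X -` S \<inter> topspace X = U"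
    proof
      show "upx X -` S \<inter> topspace X \<subseteq> U"
      proof
        fix y assume y: "y \<in> upx X -` S \<inter> topspace X"
        have "y \<in> upx X y" using y unfolding upx_def spec_le_def
          by (simp add: closure_of_hull hull_inc)
        moreover have "upx X y \<subseteq> U" using y U(2) unfolding smyth_box_def by blast
        ultimately show "y \<in> U" by blast
      qed
      show "U \<subseteq> upx X -` S \<inter> topspace X"
      proof
        fix y assume y: "y \<in> U"
        have yt: "y \<in> topspace X" using y U(1) openin_subset by blast
        have "upx X y \<subseteq> U" using open_upper[OF U(1) y] unfolding upx_def by blast
        then have "upx X y \<in> S" using upx_K[OF yt] U(2) unfolding smyth_box_def by simp
        then show "y \<in> upx X -` S \<inter> topspace X" using yt by simp
      qed
    qed
    then show "openin X (upx X -` S \<inter> topspace X)" using U(1) by simp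
  next
    show "upx X ` topspace X \<subseteq> \<Union> {smyth_box X U |U. openin X U}"
    proof
      fix K assume "K \<in> upx X ` topspace X"
      then obtain x where "x \<in> topspace X" "K = upx X x" by blast
      then have K: "K \<in> smyth_K X" by (simp add: upx_K)
      then have "K \<subseteq> topspace X" unfolding smyth_K_def compactin_def by blast
      with K have "K \<in> smyth_box X (topspace X)" unfolding smyth_box_def by blast
      then show "K \<in> \<Union> {smyth_box X U |U. openin X U}" by blast
    qed
  qed
  define B where "B = (\<lambda>c. {x \<in> topspace X. upx X x \<in> c}) ` C"
  have "countable B" unfolding B_def using C(1) by blast
  moreover have "\<forall>V\<in>B. openin X V"
  proof
    fix V assume "V \<in> B"
    then obtain c where c: "c \<in> C" "V = {x \<in> topspace X. upx X x \<in> c}" unfolding B_def by blast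
    have "openin (smyth_power X) c" using C(2) c(1) by blast
    then show "openin X V" using c(2) openin_continuous_map_preimage[OF cont] by simp
  qed
  moreover have "\<exists>V\<in>B. x \<in> V \<and> V \<subseteq> U" if U: "openin X U" "x \<in> U" for U x
  proof -
    have xt: "x \<in> topspace X" using U openin_subset by blast
    have "upx X x \<subseteq> U" using open_upper[OF U] unfolding upx_def by blast
    then have "upx X x \<in> smyth_box X U" using upx_K[OF xt] unfolding smyth_box_def by simp
    then have "\<exists>V\<in>C. upx X x \<in> V \<and> V \<subseteq> smyth_box X U"
      using C(3)[rule_format, OF conjI[OF box_open[OF U(1)]]] by simp
    then obtain c where c: "c \<in> C" "upx X x \<in> c" "c \<subseteq> smyth_box X U"
      by (elim bexE conjE) simp
    have "{y \<in> topspace X. upx X y \<in> c} \<subseteq> U"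
    proof
      fix y assume y: "y \<in> {y \<in> topspace X. upx X y \<in> c}"
      have "y \<in> upx X y" using y unfolding upx_def spec_le_def
        by (simp add: closure_of_hull hull_inc)
      moreover have "upx X y \<subseteq> U" using y c(3) unfolding smyth_box_def by blast
      ultimately show "y \<in> U" by blast
    qed
    moreover have "{y \<in> topspace X. upx X y \<in> c} \<in> B" using c(1) unfolding B_def by blast
    moreover have "x \<in> {y \<in> topspace X. upx X y \<in> c}" using c(2) xt by simp
    ultimately show ?thesis
      by (intro bexI[where x="{y \<in> topspace X. upx X y \<in> c}"] conjI) assumption+
  qed
  ultimately show "second_countable X" unfolding second_countable_def
    by (intro exI[of _ B] conjI allI impI) auto
qed

end
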